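(* Let $k\ge0$, $T>0$, and let $f$ be a solution of the kinetic model on $[0,T]$ satisfying hypotheses (H0) and (H1). Let $(f_h,{\bf q}_h)$, $f_h(t)\in\mathcal G_h^k$, ${\bf q}_h(t)\in\mathcal U_h^k$, be the solution of the semi-discrete DG scheme with periodic boundary conditions. Then there is a constant $C>0$, depending only on $d$, $\Omega$, $k$, $\phi$ and $\xi_T$, such that for all $t\in[0,T]$, $$\|{\bf v}_f(t)-{\bf v}_{f_h}(t)\|_{L^\infty(\Omega)}\le C\,\|f(t)-f_h(t)\|_{L^2(\Omega\times\mathbb S^{d-1})}.$$
   Context: Setting. Let $d\ge 2$, let $\Omega\subset\mathbb R^d$ be a box with periodic boundary conditions (identified with a flat torus; distances $|{\bf x}-{\bf x}'|$ are periodic distances), and let $\mathbb S^{d-1}$ be the unit sphere; $\nabla_{\bf v}$, ${\rm div}_{\bf v}$ denote the tangential gradient and divergence on $\mathbb S^{d-1}$, and $P_{{\bf v}^\perp}=\mathrm{Id}-{\bf v}\otimes{\bf v}$. Fix $\nu>0$ and nonnegative kernels $k,\phi$ satisfying (H0): $k,\phi\in\mathcal C^p_c([0,\infty))$ with $p\ge 2$. Kinetic model: $\partial_t f+{\bf v}\cdot\nabla_{\bf x} f=-{\rm div}_{\bf v}\big[P_{{\bf v}^\perp}{\bf v}_f\,f-\nu\nabla_{\bf v} f\big]$, with ${\bf v}_f=(\mathbf J_f+\mathbf R_f)/|\mathbf J_f+\mathbf R_f|$, $\mathbf J_f(t,{\bf x})=\int_{\Omega\times\mathbb S^{d-1}}k(|{\bf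 x}-{\bf x}'|)\,{\bf v}'f(t,{\bf x}',{\bf v}')\,d{\bf x}'d{\bf v}'$, $\mathbf R_f(t,{\bf x})=-\nabla_{\bf x}\int_{\Omega\times\mathbb S^{d-1}}\phi(|{\bf x}-{\bf x}'|)f(t,{\bf x}',{\bf v}')\,d{\bf x}'d{\bf v}'$. Hypothesis (H1): there is $\xi_T>0$ with $|\mathbf J_f(t,{\bf x})+\mathbf R_f(t,{\bf x})|\ge\xi_T$ for all $(t,{\bf x})\in[0,T]\times\Omega$. Mesh: $\mathcal T_h^{\bf x}=\{K_{\bf x}\}$ is a shape-regular partition of $\Omega$ into Cartesian cells (compatible with periodicity), $\mathcal T_h^{\bf v}=\{K_{\bf v}\}$ a shape-regular partition of $\mathbb S^{d-1}$ into cells, $\mathcal T_h=\{K=K_{\bf x}\times K_{\bf v}\}$, with mesh size $h$. Faces: $\mathcal E_{\bf x}=\{\sigma_{\bf x}\times K_{\bf v}:\sigma_{\bf x}\subset\partial K_{\bf x}\}$, $\mathcal E_{\bf v}=\{K_{\bf x}\times\sigma_{\bf v}:\sigma_{\bf v}\subset\partial K_{\bf v}\}$. Spaces: $\mathcal G_h^k=\{g\in L^2(\Omega\times\mathbb S^{d-1}): g|_K\in P^k(K)\ \forall K\in\mathcal T_h\}$ ($P^k$ = polynomials of total degree $\le k$), and $\mathcal U_h^k$ the corresponding space of vector fields with each component piecewise in $P^k$. For a face $\sigma$ shared by cells $K^-$ and $K^+$, with traces $g^\pm$ from $K^\pm$ and ${\bf n}$ the unit normal on $\sigma$ pointing from $K^-$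 to $K^+$ (${\bf n}_{\bf x}$ for $\sigma\in\mathcal E_{\bf x}$, ${\bf n}_{\bf v}$ for $\sigma\in\mathcal E_{\bf v}$): $[g]=g^+-g^-$, $\{g\}=\tfrac12(g^++g^-)$ (written $[\cdot]_{\bf x},\{\cdot\}_{\bf x}$ or $[\cdot]_{\bf v},\{\cdot\}_{\bf v}$). Volume integrals of derivatives of piecewise functions are taken cellwise. Discrete velocity: $\rho_h=\int_{\mathbb S^{d-1}}f_h\,d{\bf v}$, $\rho_h{\bf u}_h=\int_{\mathbb S^{d-1}}{\bf v} f_h\,d{\bf v}$, $\mathbf J_h(t,{\bf x})=\int_\Omega k(|{\bf x}-{\bf x}'|)\rho_h{\bf u}_h(t,{\bf x}')d{\bf x}'$, $\mathbf R_h(t,{\bf x})=-\int_\Omega\nabla_{\bf x}[\phi(|{\bf x}-{\bf x}'|)]\rho_h(t,{\bf x}')d{\bf x}'$, ${\bf v}_{f_h}=(\mathbf J_h+\mathbf R_h)/|\mathbf J_h+\mathbf R_h|$ (it is assumed $\mathbf J_h+\mathbf R_h\neq0$). Fluxes (with constants $C_{11},C_{22}>0$): $\widehat{f_h{\bf v}}\cdot{\bf n}_{\bf x}={\bf v}\cdot{\bf n}_{\bf x}\{f_h\}_{\bf x}-\tfrac12|{\bf v}\cdot{\bf n}_{\bf x}|[f_h]_{\bf x}$; $\widehat{f_hP_{{\bf v}^\perp}{\bf v}_{f_h}}\cdot{\bf n}_{\bf v}=P_{{\bf v}^\perp}{\bf v}_{f_h}\cdot{\bf n}_{\bf v}\{f_h\}_{\bf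 v}-\tfrac12|P_{{\bf v}^\perp}{\bf v}_{f_h}\cdot{\bf n}_{\bf v}|[f_h]_{\bf v}$; $\widehat{{\bf q}_h}\cdot{\bf n}_{\bf v}=\{{\bf q}_h\}_{\bf v}\cdot{\bf n}_{\bf v}+\tfrac{C_{11}}2[f_h]_{\bf v}$; $\widehat{f_h}{\bf n}_{\bf v}=\{f_h\}_{\bf v}{\bf n}_{\bf v}+\tfrac{C_{22}}2[{\bf q}_h]_{\bf v}$. Semi-discrete DG scheme: $f_h(t)\in\mathcal G_h^k$, ${\bf q}_h(t)\in\mathcal U_h^k$ satisfy, for all $g\in\mathcal G_h^k$ and ${\bf u}\in\mathcal U_h^k$, $\int\!\big(\partial_tf_h\,g-f_h{\bf v}\cdot\nabla_{\bf x}g\big)-\int\!\big(P_{{\bf v}^\perp}{\bf v}_{f_h}f_h-\nu{\bf q}_h\big)\cdot\nabla_{\bf v}g-\sum_{\sigma\in\mathcal E_{\bf x}}\int_\sigma\widehat{f_h{\bf v}}\cdot{\bf n}_{\bf x}[g]_{\bf x}-\sum_{\sigma\in\mathcal E_{\bf v}}\int_\sigma\big(\widehat{f_hP_{{\bf v}^\perp}{\bf v}_{f_h}}-\nu\widehat{{\bf q}_h}\big)\cdot{\bf n}_{\bf v}[g]_{\bf v}=0,$ $\int\!\big({\bf q}_h\cdot{\bf u}+f_h\,{\rm div}_{\bf v}{\bf u}\big)+\sum_{\sigma\in\mathcal E_{\bf v}}\int_\sigma\widehat{f_h}{\bf n}_{\bf v}\cdot[{\bf u}]_{\bf v}=0,$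 where unlabeled volume integrals are over $\Omega\times\mathbb S^{d-1}$. *)

theory Defs
  imports "HOL-Analysis.Analysis"
begin

text \<open>Periodic box Omega = [0,L_1) x ... x [0,L_d), identified with a flat torus.\<close>
definition torus_box :: "real^'n \<Rightarrow> (real^'n) set" where
  "torus_box L = {x. \<forall>i. 0 \<le> x$i \<and> x$i < L$i}"

definition per1 :: "real \<Rightarrow> real \<Rightarrow> real" where
  "per1 l a = \<bar>a - l * of_int (round (a / l))\<bar>"

definition per_dist :: "real^'n \<Rightarrow> real^'n \<Rightarrow> real^'n \<Rightarrow> real" where
  "per_dist L x y = sqrt (\<Sum>i\<in>UNIV. (per1 (L$i) (x$i - y$i))^2)"

text \<open>Surface measure on the unit sphere S^{d-1}: sigma(A) = d * Lebesgue measure of the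
  cone {r v : 0 < r \<le> 1, v \<in> A} (pushforward of Lebesgue measure on the punctured
  unit ball under radial projection, scaled by d).\<close>
definition sphere_measure :: "(real^'n) measure" where
  "sphere_measure = scale_measure (of_nat CARD('n))
     (distr (lebesgue_on (ball 0 1 - {0})) borel (\<lambda>y. y /\<^sub>R norm y))"

definition phase_measure :: "real^'n \<Rightarrow> ((real^'n) \<times> (real^'n)) measure" where
  "phase_measure L = lebesgue_on (torus_box L) \<Otimes>\<^sub>M sphere_measure"

definition grad :: "(real^'n \<Rightarrow> real) \<Rightarrow> real^'n \<Rightarrow> real^'n" where
  "grad g x = (\<chi> i. deriv (\<lambda>s. g (x + s *\<^sub>R axis i 1)) 0)"

text \<open>g \<in> C^p_c([0,\<infinity>)): p times continuously differentiable on [0,\<infinity>)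
  (one-sided at 0) with compact support.\<close>
definition Ckc :: "nat \<Rightarrow> (real \<Rightarrow> real) \<Rightarrow> bool" where
  "Ckc p g \<longleftrightarrow> (\<exists>R. \<forall>r\<ge>R. g r = 0) \<and>
     (\<exists>D :: nat \<Rightarrow> real \<Rightarrow> real. (\<forall>r\<ge>0. D 0 r = g r) \<and>
        (\<forall>j<p. \<forall>r\<ge>0. (D j has_real_derivative D (Suc j) r) (at r within {0..})) \<and>
        continuous_on {0..} (D p))"

definition L2_fun :: "'a measure \<Rightarrow> ('a \<Rightarrow> real) \<Rightarrow> bool" where
  "L2_fun M g \<longleftrightarrow> g \<in> borel_measurable M \<and> integrable M (\<lambda>z. (g z)^2)"

definition L2_dist :: "real^'n \<Rightarrow> (real^'n \<Rightarrow> real^'n \<Rightarrow> real) \<Rightarrow> (real^'n \<Rightarrow> real^'n \<Rightarrow> real) \<Rightarrow> real" where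
  "L2_dist L f g = sqrt (\<integral>z. (f (fst z) (snd z) - g (fst z) (snd z))^2 \<partial>phase_measure L)"

definition unitv :: "real^'n \<Rightarrow> real^'n" where
  "unitv w = w /\<^sub>R norm w"

definition J_f :: "real^'n \<Rightarrow> (real \<Rightarrow> real) \<Rightarrow> (real^'n \<Rightarrow> real^'n \<Rightarrow> real) \<Rightarrow> real^'n \<Rightarrow> real^'n" where
  "J_f L kk f x = (\<integral>z. (kk (per_dist L x (fst z)) * f (fst z) (snd z)) *\<^sub>R snd z \<partial>phase_measure L)"

definition R_f :: "real^'n \<Rightarrow> (real \<Rightarrow> real) \<Rightarrow> (real^'n \<Rightarrow> real^'n \<Rightarrow> real) \<Rightarrow> real^'n \<Rightarrow> real^'n" where
  "R_f L phi f x = - grad (\<lambda>y. \<integral>z. phi (per_dist L y (fst z)) * f (fst z) (snd z) \<partial>phase_measure L) x"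

definition v_f :: "real^'n \<Rightarrow> (real \<Rightarrow> real) \<Rightarrow> (real \<Rightarrow> real) \<Rightarrow> (real^'n \<Rightarrow> real^'n \<Rightarrow> real) \<Rightarrow> real^'n \<Rightarrow> real^'n" where
  "v_f L kk phi f x = unitv (J_f L kk f x + R_f L phi f x)"

definition rho_h :: "(real^'n \<Rightarrow> real^'n \<Rightarrow> real) \<Rightarrow> real^'n \<Rightarrow> real" where
  "rho_h fh x' = (\<integral>v. fh x' v \<partial>sphere_measure)"

definition rhou_h :: "(real^'n \<Rightarrow> real^'n \<Rightarrow> real) \<Rightarrow> real^'n \<Rightarrow> real^'n" where
  "rhou_h fh x' = (\<integral>v. fh x' v *\<^sub>R v \<partial>sphere_measure)"

definition J_h :: "real^'n \<Rightarrow> (real \<Rightarrow> real) \<Rightarrow> (real^'n \<Rightarrow> real^'n \<Rightarrow> real) \<Rightarrow> real^'n \<Rightarrow> real^'n" where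
  "J_h L kk fh x = (\<integral>x'. kk (per_dist L x x') *\<^sub>R rhou_h fh x' \<partial>lebesgue_on (torus_box L))"

definition R_h :: "real^'n \<Rightarrow> (real \<Rightarrow> real) \<Rightarrow> (real^'n \<Rightarrow> real^'n \<Rightarrow> real) \<Rightarrow> real^'n \<Rightarrow> real^'n" where
  "R_h L phi fh x = - (\<integral>x'. rho_h fh x' *\<^sub>R grad (\<lambda>y. phi (per_dist L y x')) x \<partial>lebesgue_on (torus_box L))"

definition v_h :: "real^'n \<Rightarrow> (real \<Rightarrow> real) \<Rightarrow> (real \<Rightarrow> real) \<Rightarrow> (real^'n \<Rightarrow> real^'n \<Rightarrow> real) \<Rightarrow> real^'n \<Rightarrow> real^'n" where
  "v_h L kk phi fh x = unitv (J_h L kk fh x + R_h L phi fh x)"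

end

theory Submission
  imports Defs
begin


lemma per1_nonneg: "per1 l a \<ge> 0" by (simp add: per1_def)

lemma per1_le: assumes "l > 0" shows "per1 l a \<le> \<bar>a - l * of_int m\<bar>"
proof -
  have "\<bar>a/l - of_int (round (a/l))\<bar> \<le> \<bar>a/l - of_int m\<bar>" by (rule round_diff_minimal)
  hence "l * \<bar>a/l - of_int (round (a/l))\<bar> \<le> l * \<bar>a/l - of_int m\<bar>" using assms by simp
  moreover have "l * \<bar>a/l - c\<bar> = \<bar>a - l * c\<bar>" for c
  proof -
    have "l*(a/l-c) = a - l*c" using assms by (simp add: field_simps)
    have "l * \<bar>a/l - c\<bar> = \<bar>l\<bar> * \<bar>a/l - c\<bar>" using assms by simp
    also have "\<dots> = \<bar>l*(a/l-c)\<bar>" by (rule abs_mult[symmetric])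
    finally show ?thesis using \<open>l*(a/l-c) = a - l*c\<close> by simp
  qed
  ultimately show ?thesis by (simp add: per1_def)
qed

lemma per1_lip: assumes "l > 0" shows "\<bar>per1 l a - per1 l b\<bar> \<le> \<bar>a - b\<bar>"
proof -
  have 1: "per1 l a \<le> \<bar>a - b\<bar> + per1 l b"
    using per1_le[OF assms, of a "round (b/l)"] unfolding per1_def by linarith
  have 2: "per1 l b \<le> \<bar>a - b\<bar> + per1 l a"
    using per1_le[OF assms, of b "round (a/l)"] unfolding per1_def by linarith
  from 1 2 show ?thesis by linarith
qed

definition pvec :: "real^'n \<Rightarrow> real^'n \<Rightarrow> real^'n \<Rightarrow> real^'n" where
  "pvec L y x = (\<chi> j. per1 (L$j) (y$j - x$j))"

lemma per_dist_norm: "per_dist L y x = norm (pvec L y x)"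
  by (simp add: per_dist_def norm_vec_def L2_set_def pvec_def)

lemma per_dist_nonneg: "per_dist L y x \<ge> 0"
  by (simp add: per_dist_norm)

lemma pvec_lip:
  assumes "\<forall>i. L$i > 0"
  shows "norm (pvec L y x - pvec L y' x') \<le> (\<Sum>j\<in>UNIV. \<bar>(y$j - x$j) - (y'$j - x'$j)\<bar>)"
proof -
  have "norm (pvec L y x - pvec L y' x') \<le> (\<Sum>j\<in>UNIV. \<bar>(pvec L y x - pvec L y' x')$j\<bar>)"
    by (rule norm_le_l1_cart)
  also have "\<dots> \<le> (\<Sum>j\<in>UNIV. \<bar>(y$j - x$j) - (y'$j - x'$j)\<bar>)"
    by (rule sum_mono) (simp add: pvec_def per1_lip assms)
  finally show ?thesis .
qed

lemma per_dist_lip: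
  assumes "\<forall>i. L$i > 0"
  shows "\<bar>per_dist L y x - per_dist L y' x'\<bar> \<le> (\<Sum>j\<in>UNIV. \<bar>(y$j - x$j) - (y'$j - x'$j)\<bar>)"
  using pvec_lip[OF assms, of y x y' x'] norm_triangle_ineq3[of "pvec L y x" "pvec L y' x'"]
  by (simp add: per_dist_norm)

lemma per_dist_axis:
  assumes "\<forall>i. L$i > 0"
  shows "\<bar>per_dist L (y + s *\<^sub>R axis i 1) x - per_dist L y x\<bar> \<le> \<bar>s\<bar>"
proof -
  have "\<bar>per_dist L (y + s *\<^sub>R axis i 1) x - per_dist L y x\<bar>
     \<le> (\<Sum>j\<in>UNIV. \<bar>((y + s *\<^sub>R axis i 1)$j - x$j) - (y$j - x$j)\<bar>)"
    by (rule per_dist_lip[OF assms])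
  also have "\<dots> = (\<Sum>j\<in>UNIV. if j = i then \<bar>s\<bar> else 0)"
    by (rule sum.cong) (auto simp: axis_def)
  also have "\<dots> = \<bar>s\<bar>" by simp
  finally show ?thesis .
qed

lemma continuous_per_dist:
  assumes "\<forall>i. L$i > 0"
  shows "continuous_on UNIV (\<lambda>x. per_dist L y x)"
proof -
  have "\<bar>per_dist L y x - per_dist L y x'\<bar> \<le> of_nat CARD('a) * dist x x'" for x x' :: "real^'a"
  proof -
    have "\<bar>per_dist L y x - per_dist L y x'\<bar> \<le> (\<Sum>j\<in>UNIV. \<bar>(y$j - x$j) - (y$j - x'$j)\<bar>)"
      by (rule per_dist_lip[OF assms])
    also have "\<dots> \<le> (\<Sum>j\<in>(UNIV::'a set). dist x x')"
      apply (rule sum_mono)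
      using component_le_norm_cart[of "x - x'"] by (simp add: dist_norm abs_minus_commute)
    finally show ?thesis by simp
  qed
  then have "lipschitz_on (of_nat CARD('a)) UNIV (\<lambda>x. per_dist L y x)"
    by (intro lipschitz_onI) (auto simp: dist_real_def)
  then show ?thesis by (rule lipschitz_on_continuous_on)
qed



lemma Ckc_lip:
  assumes "Ckc p g" "p \<ge> 2"
  shows "\<exists>M\<ge>0. \<forall>a\<ge>0. \<forall>b\<ge>0. \<bar>g a - g b\<bar> \<le> M * \<bar>a - b\<bar>"
proof -
  obtain R where R: "\<forall>r\<ge>R. g r = 0" using assms(1) unfolding Ckc_def by blast
  obtain D :: "nat \<Rightarrow> real \<Rightarrow> real" where D0: "\<forall>r\<ge>0. D 0 r = g r"
    and Dd: "\<forall>j<p. \<forall>r\<ge>0. (D j has_real_derivative D (Suc j) r) (at r within {0..})"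
    using assms(1) unfolding Ckc_def by blast
  define R' where "R' = max R 0"
  have d0: "(D 0 has_real_derivative D 1 r) (at r within {0..})" if "r \<ge> 0" for r
    using Dd assms(2) that by auto
  have d1: "(D 1 has_real_derivative D 2 r) (at r within {0..})" if "r \<ge> 0" for r
    using Dd assms(2) that by (auto simp: numeral_2_eq_2)
  have "continuous_on {0..} (D 1)"
    unfolding continuous_on_eq_continuous_within
    using d1 DERIV_continuous by (metis atLeast_iff)
  hence c1: "continuous_on {0..R'} (D 1)" by (rule continuous_on_subset) auto
  obtain B where B: "\<forall>x\<in>{0..R'}. norm (D 1 x) \<le> B"
    using compact_imp_bounded[OF compact_continuous_image[OF c1 compact_Icc]]
    unfolding bounded_iff by auto
  have lip0: "\<bar>D 0 a - D 0 b\<bar> \<le> B * \<bar>a - b\<bar>" if "a \<in> {0..R'}" "b \<in> {0..R'}" for a b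
  proof -
    have "norm (D 0 a - D 0 b) \<le> B * norm (a - b)"
      apply (rule field_differentiable_bound[of "{0..R'}" "D 0" "D 1"])
      subgoal by simp
      subgoal for z by (rule DERIV_subset[OF d0]) auto
      using that B by auto
    thus ?thesis by simp
  qed
  have clamp: "g a = D 0 (min a R')" if "a \<ge> 0" for a
  proof (cases "a \<le> R'")
    case True thus ?thesis using D0 that by simp
  next
    case False
    have "g a = 0" using R False R'_def by auto
    moreover have "D 0 R' = 0" using D0 R R'_def by auto
    ultimately show ?thesis using False by simp
  qed
  have "B \<ge> 0" using B R'_def by (metis atLeastAtMost_iff max.cobounded2 norm_ge_zero order.trans order_refl)
  moreover have "\<bar>g a - g b\<bar> \<le> B * \<bar>a - b\<bar>" if "a \<ge> 0" "b \<ge> 0" for a b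
  proof -
    have "\<bar>g a - g b\<bar> = \<bar>D 0 (min a R') - D 0 (min b R')\<bar>" using clamp that by simp
    also have "\<dots> \<le> B * \<bar>min a R' - min b R'\<bar>"
      by (rule lip0) (use that R'_def in auto)
    also have "\<dots> \<le> B * \<bar>a - b\<bar>"
      using \<open>B \<ge> 0\<close> by (intro mult_left_mono) (auto simp: min_def)
    finally show ?thesis .
  qed
  ultimately show ?thesis by blast
qed

lemma Ckc_bound:
  assumes "Ckc p g" "p \<ge> 2"
  shows "\<exists>B\<ge>0. \<forall>r\<ge>0. \<bar>g r\<bar> \<le> B"
proof -
  obtain R where R: "\<forall>r\<ge>R. g r = 0" using assms(1) unfolding Ckc_def by blast
  obtain M where M: "M \<ge> 0" "\<forall>a\<ge>0. \<forall>b\<ge>0. \<bar>g a - g b\<bar> \<le> M * \<bar>a - b\<bar>"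
    using Ckc_lip[OF assms] by blast
  define R' where "R' = max R 0"
  have "\<bar>g r\<bar> \<le> M * R'" if "r \<ge> 0" for r
  proof (cases "r \<le> R'")
    case True
    have "\<bar>g r - g R'\<bar> \<le> M * \<bar>r - R'\<bar>" using M that R'_def by auto
    moreover have "g R' = 0" using R R'_def by auto
    ultimately show ?thesis using True that M(1)
      by (smt (verit, best) mult_left_mono)
  next
    case False thus ?thesis using R R'_def M(1) by auto
  qed
  moreover have "M * R' \<ge> 0" using M R'_def by auto
  ultimately show ?thesis by blast
qed

lemma Ckc_cont:
  assumes "Ckc p g" "p \<ge> 2"
  shows "continuous_on {0..} g"
proof -
  obtain M where M: "M \<ge> 0" "\<forall>a\<ge>0. \<forall>b\<ge>0. \<bar>g a - g b\<bar> \<le> M * \<bar>a - b\<bar>"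
    using Ckc_lip[OF assms] by blast
  have "lipschitz_on M {0..} g"
    using M by (intro lipschitz_onI) (auto simp: dist_real_def)
  thus ?thesis by (rule lipschitz_on_continuous_on)
qed

lemma Ckc_diff:
  assumes "Ckc p g" "p \<ge> 2" "r > 0"
  shows "g differentiable (at r)"
proof -
  obtain D :: "nat \<Rightarrow> real \<Rightarrow> real" where D0: "\<forall>r\<ge>0. D 0 r = g r"
    and Dd: "\<forall>j<p. \<forall>r\<ge>0. (D j has_real_derivative D (Suc j) r) (at r within {0..})"
    using assms(1) unfolding Ckc_def by blast
  have "(D 0 has_real_derivative D 1 r) (at r within {0..})"
    using Dd assms by auto
  moreover have "at r within {0..} = at r"
    by (rule at_within_interior) (use assms(3) in auto)
  ultimately have "(D 0 has_real_derivative D 1 r) (at r)" by simp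
  hence "(g has_real_derivative D 1 r) (at r)"
    by (rule has_field_derivative_transform_within_open[of _ _ _ "{0<..}"])
       (use assms(3) D0 in auto)
  thus ?thesis using real_differentiable_def by blast
qed



lemma box_borel: "torus_box L \<in> sets borel"
proof -
  have "torus_box L = (\<Inter>i. {x::real^'a. 0 \<le> x$i} \<inter> {x. x$i < L$i})"
    by (auto simp: torus_box_def)
  also have "\<dots> \<in> sets borel"
  proof (rule sets.countable_INT'')
    show "countable (UNIV::'a set)" by simp
    show "UNIV \<in> sets borel" by simp
    fix i
    have "{x::real^'a. 0 \<le> x$i} \<in> sets borel"
      by (intro borel_closed closed_Collect_le continuous_intros)
    moreover have "{x::real^'a. x$i < L$i} \<in> sets borel"
      by (intro borel_open open_Collect_less continuous_intros)
    ultimately show "{x::real^'a. 0 \<le> x$i} \<inter> {x. x$i < L$i} \<in> sets borel" by blast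
  qed
  finally show ?thesis .
qed

lemma box_lebesgue: "torus_box L \<in> sets lebesgue"
  using box_borel by (metis sets_lborel sets_completionI_sets)

lemma box_bounded: "bounded (torus_box (L::real^'a))"
proof -
  have "norm x \<le> (\<Sum>i\<in>UNIV. \<bar>L$i\<bar>)" if "x \<in> torus_box L" for x
  proof -
    have "norm x \<le> (\<Sum>i\<in>UNIV. \<bar>x$i\<bar>)" by (rule norm_le_l1_cart)
    also have "\<dots> \<le> (\<Sum>i\<in>UNIV. \<bar>L$i\<bar>)"
      apply (rule sum_mono)
      subgoal for i using that unfolding torus_box_def by (smt (verit) mem_Collect_eq)
      done
    finally show ?thesis .
  qed
  thus ?thesis unfolding bounded_iff by blast
qed

lemma box_finite: "finite_measure (lebesgue_on (torus_box L))"
proof -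
  have "torus_box L \<in> lmeasurable"
    by (rule bounded_set_imp_lmeasurable[OF box_bounded box_lebesgue])
  thus ?thesis
    by (intro finite_measureI) (simp add: emeasure_restrict_space box_lebesgue fmeasurable_def)
qed

lemma sets_sphere[simp]: "sets sphere_measure = sets borel"
  by (simp add: sphere_measure_def)

lemma space_sphere[simp]: "space sphere_measure = UNIV"
  by (simp add: sphere_measure_def space_scale_measure)

lemma proj_meas: "(\<lambda>y::real^'a. y /\<^sub>R norm y) \<in> lebesgue_on (ball 0 1 - {0}) \<rightarrow>\<^sub>M (borel :: (real^'a) measure)"
  by (intro measurable_completion measurable_restrict_space1) measurable

lemma sphere_finite: "finite_measure (sphere_measure :: (real^'a) measure)"
proof -
  have B: "ball (0::real^'a) 1 - {0} \<in> lmeasurable"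
    by (intro bounded_set_imp_lmeasurable) auto
  have "emeasure (sphere_measure :: (real^'a) measure) UNIV
       = of_nat CARD('a) * emeasure (lebesgue_on (ball (0::real^'a) 1 - {0})) (ball 0 1 - {0})"
    unfolding sphere_measure_def
    by (simp add: emeasure_distr[OF proj_meas])
  also have "\<dots> < \<infinity>"
    using B by (simp add: emeasure_restrict_space fmeasurable_def ennreal_mult_less_top
                 ennreal_of_nat_eq_real_of_nat)
  finally show ?thesis
    by (intro finite_measureI) simp
qed

lemma sphere_AE_norm: "AE v in (sphere_measure :: (real^'a) measure). norm v \<le> 1"
proof (rule AE_I')
  let ?N = "{v::real^'a. 1 < norm v}"
  have "?N \<in> sets borel" by (intro borel_open open_Collect_less) (auto intro: continuous_intros)
  have "emeasure (distr (lebesgue_on (ball (0::real^'a) 1 - {0})) borel (\<lambda>y. y /\<^sub>R norm y)) ?N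
        = emeasure (lebesgue_on (ball (0::real^'a) 1 - {0})) ((\<lambda>y. y /\<^sub>R norm y) -` ?N \<inter> (ball 0 1 - {0}))"
    using emeasure_distr[OF proj_meas \<open>?N \<in> sets borel\<close>] by simp
  also have "(\<lambda>y::real^'a. y /\<^sub>R norm y) -` ?N \<inter> (ball 0 1 - {0}) = {}"
  proof -
    have "norm (y /\<^sub>R norm y) \<le> 1" for y :: "real^'a"
      using norm_sgn[of y] by (simp add: sgn_div_norm split: if_splits)
    thus ?thesis by (auto simp del: norm_scaleR) (meson linorder_not_le)
  qed
  finally have "emeasure (sphere_measure :: (real^'a) measure) ?N = 0"
    unfolding sphere_measure_def by simp
  thus "?N \<in> null_sets sphere_measure"
    using \<open>?N \<in> sets borel\<close> by (simp add: null_sets_def)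
qed auto

lemma snd_sphere_meas[measurable]: "snd \<in> (M \<Otimes>\<^sub>M sphere_measure) \<rightarrow>\<^sub>M borel"
  using measurable_snd[of M sphere_measure] by (simp cong: measurable_cong_sets)

lemma phase_finite: "finite_measure (phase_measure L)"
  unfolding phase_measure_def
  by (intro finite_measure_pair_measure box_finite sphere_finite)

lemma pair_sf: "pair_sigma_finite (lebesgue_on (torus_box L)) (sphere_measure :: (real^'a) measure)"
proof -
  interpret A: finite_measure "lebesgue_on (torus_box L)" by (rule box_finite)
  interpret B: finite_measure "sphere_measure :: (real^'a) measure" by (rule sphere_finite)
  show ?thesis by unfold_locales
qed

lemma phase_AE_norm: "AE z in phase_measure L. norm (snd z) \<le> (1::real)"
  unfolding phase_measure_def
proof (rule pair_sigma_finite.AE_pair_measure[OF pair_sf])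
  show "{x \<in> space (lebesgue_on (torus_box L) \<Otimes>\<^sub>M sphere_measure). norm (snd x) \<le> 1}
        \<in> sets (lebesgue_on (torus_box L) \<Otimes>\<^sub>M sphere_measure)"
    by measurable
  show "AE x in lebesgue_on (torus_box L). AE y in sphere_measure. norm (snd (x, y)) \<le> 1"
    by (rule AE_I2) (simp add: sphere_AE_norm)
qed



lemma deriv_integral:
  fixes F :: "real \<Rightarrow> 'a \<Rightarrow> real"
  assumes meas: "\<And>s. F s \<in> borel_measurable M"
    and int0: "integrable M (F 0)"
    and w: "integrable M w"
    and lip: "\<And>s z. z \<in> space M \<Longrightarrow> \<bar>F s z - F 0 z\<bar> \<le> \<bar>s\<bar> * w z"
    and der: "AE z in M. ((\<lambda>s. F s z) has_real_derivative F' z) (at 0)"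
    and meas': "F' \<in> borel_measurable M"
  shows "((\<lambda>s. \<integral>z. F s z \<partial>M) has_real_derivative (\<integral>z. F' z \<partial>M)) (at 0)"
proof -
  have intd: "integrable M (\<lambda>z. F s z - F 0 z)" for s
  proof (rule Bochner_Integration.integrable_bound)
    show "integrable M (\<lambda>z. \<bar>s\<bar> * w z)" using w by simp
    show "(\<lambda>z. F s z - F 0 z) \<in> borel_measurable M" using meas by measurable
    show "AE z in M. norm (F s z - F 0 z) \<le> norm (\<bar>s\<bar> * w z)"
      using order_trans[OF lip abs_ge_self] by (intro AE_I2) simp
  qed
  have ints: "integrable M (F s)" for s
  proof -
    have "integrable M (\<lambda>z. (F s z - F 0 z) + F 0 z)"
      using intd int0 by (rule Bochner_Integration.integrable_add)
    thus ?thesis by simp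
  qed
  show ?thesis unfolding DERIV_def tendsto_at_iff_sequentially
  proof (intro allI impI)
    fix X :: "nat \<Rightarrow> real" assume X: "\<forall>i. X i \<in> UNIV - {0}" "X \<longlonglongrightarrow> 0"
    have eq: "((\<lambda>h. ((\<integral>z. F (0 + h) z \<partial>M) - (\<integral>z. F 0 z \<partial>M)) / h) \<circ> X) n
            = (\<integral>z. (F (X n) z - F 0 z) / X n \<partial>M)" for n
      using ints int0 by (simp add: Bochner_Integration.integral_diff)
    have "(\<lambda>n. \<integral>z. (F (X n) z - F 0 z) / X n \<partial>M) \<longlonglongrightarrow> (\<integral>z. F' z \<partial>M)"
    proof (rule integral_dominated_convergence[where w=w])
      show "F' \<in> borel_measurable M" by fact
      show "(\<lambda>z. (F (X n) z - F 0 z) / X n) \<in> borel_measurable M" for n using meas by measurable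
      show "integrable M w" by fact
      show "AE z in M. (\<lambda>n. (F (X n) z - F 0 z) / X n) \<longlonglongrightarrow> F' z"
        using der
      proof eventually_elim
        case (elim z)
        hence "(\<lambda>h. (F (0 + h) z - F 0 z) / h) \<midarrow>0\<rightarrow> F' z" by (simp add: DERIV_def)
        hence "((\<lambda>h. (F (0 + h) z - F 0 z) / h) \<circ> X) \<longlonglongrightarrow> F' z"
          using X unfolding tendsto_at_iff_sequentially by blast
        thus ?case by (simp add: comp_def)
      qed
      show "AE z in M. norm ((F (X n) z - F 0 z) / X n) \<le> w z" for n
      proof (rule AE_I2)
        fix z assume "z \<in> space M"
        hence "\<bar>F (X n) z - F 0 z\<bar> \<le> \<bar>X n\<bar> * w z" by (rule lip)
        moreover have "X n \<noteq> 0" using X by auto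
        ultimately show "norm ((F (X n) z - F 0 z) / X n) \<le> w z"
          by (simp add: abs_divide divide_le_eq mult.commute)
      qed
    qed
    thus "((\<lambda>h. ((\<integral>z. F (0 + h) z \<partial>M) - (\<integral>z. F 0 z \<partial>M)) / h) \<circ> X) \<longlonglongrightarrow> (\<integral>z. F' z \<partial>M)"
      unfolding eq .
  qed
qed



definition Eset :: "real^'n \<Rightarrow> real^'n \<Rightarrow> 'n \<Rightarrow> (real^'n) set" where
  "Eset L x i = {y. 2 * (x$i - y$i) / L$i \<in> \<int>}"

lemma per1_sq: "(per1 l b)^2 = (b - l * of_int \<lfloor>b / l + 1/2\<rfloor>)^2"
  by (simp add: per1_def round_def)

lemma per1_sq_diff:
  assumes "l > 0" "a / l + 1/2 \<notin> \<int>"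
  shows "(\<lambda>s. (per1 l (a + s))^2) differentiable (at 0)"
proof -
  have fl: "((\<lambda>s. of_int \<lfloor>(a + s) / l + 1/2\<rfloor>) has_real_derivative 0) (at 0)"
    by (rule floor_has_real_derivative) (use assms in \<open>auto intro!: continuous_intros\<close>)
  have fld: "(\<lambda>s. of_int \<lfloor>(a + s) / l + 1/2\<rfloor> :: real) differentiable (at 0)"
    using fl real_differentiable_def by blast
  have "(\<lambda>s. (a + s - l * of_int \<lfloor>(a + s) / l + 1/2\<rfloor>)^2) differentiable (at 0)"
    by (intro differentiable_power differentiable_diff differentiable_add differentiable_const
        differentiable_ident differentiable_mult fld)
  thus ?thesis by (simp add: per1_sq)
qed

lemma per1_zero: assumes "l > 0" "per1 l a = 0" shows "a / l \<in> \<int>"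
proof -
  have "a = l * of_int (round (a / l))" using assms(2) by (simp add: per1_def)
  hence "a / l = of_int (round (a / l))" using assms(1) by (simp add: field_simps)
  thus ?thesis by (metis Ints_of_int)
qed

lemma kernel_diff:
  fixes L x y :: "real^'n"
  assumes box: "\<forall>j. L$j > 0" and phi: "Ckc p phi" "p \<ge> 2" and y: "y \<notin> Eset L x i"
  shows "(\<lambda>s. phi (per_dist L (x + s *\<^sub>R axis i 1) y)) differentiable (at 0)"
proof -
  define a where "a = x$i - y$i"
  define l where "l = L$i"
  have l: "l > 0" using box l_def by auto
  have a2: "2 * a / l \<notin> \<int>" using y by (simp add: Eset_def a_def l_def)
  have ah: "a / l + 1/2 \<notin> \<int>"
  proof
    assume "a / l + 1/2 \<in> \<int>"
    then obtain m where m: "a / l + 1/2 = of_int m" by (auto elim: Ints_cases)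
    have e: "2 * a / l = 2 * (a / l + 1/2) - 1" by (simp add: algebra_simps)
    hence "2 * a / l = of_int (2*m - 1)" using m by simp
    thus False using a2 by (metis Ints_of_int)
  qed
  have ai: "a / l \<notin> \<int>"
  proof
    assume "a / l \<in> \<int>"
    then obtain m where m: "a / l = of_int m" by (auto elim: Ints_cases)
    have e: "2 * a / l = 2 * (a / l)" by simp
    hence "2 * a / l = of_int (2*m)" using m by simp
    thus False using a2 by (metis Ints_of_int)
  qed
  define S where "S = (\<lambda>s. \<Sum>j\<in>UNIV. (per1 (L$j) ((x + s *\<^sub>R axis i 1)$j - y$j))^2)"
  have pd: "per_dist L (x + s *\<^sub>R axis i 1) y = sqrt (S s)" for s
    by (simp add: per_dist_def S_def)
  have Sd: "S differentiable (at 0)"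
    unfolding S_def
  proof (rule differentiable_sum, simp, intro ballI)
    fix j :: 'n
    show "(\<lambda>s. (per1 (L$j) ((x + s *\<^sub>R axis i 1)$j - y$j))^2) differentiable (at 0)"
    proof (cases "j = i")
      case True
      have "(\<lambda>s. (per1 l (a + s))^2) differentiable (at 0)" by (rule per1_sq_diff[OF l ah])
      moreover have "(\<lambda>s. (per1 (L$j) ((x + s *\<^sub>R axis i 1)$j - y$j))^2) = (\<lambda>s. (per1 l (a + s))^2)"
        using True by (simp add: a_def l_def axis_def algebra_simps)
      ultimately show ?thesis by simp
    next
      case False
      have "(\<lambda>s. (per1 (L$j) ((x + s *\<^sub>R axis i 1)$j - y$j))^2) = (\<lambda>s. (per1 (L$j) (x$j - y$j))^2)"
        using False by (simp add: axis_def)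
      thus ?thesis by simp
    qed
  qed
  have Spos: "S 0 > 0"
  proof -
    have "S 0 \<ge> (per1 (L$i) ((x + 0 *\<^sub>R axis i 1)$i - y$i))^2"
      unfolding S_def by (rule member_le_sum) auto
    moreover have "per1 l a \<noteq> 0" using per1_zero[OF l] ai by blast
    moreover have "(x + 0 *\<^sub>R axis i 1)$i - y$i = a" by (simp add: a_def)
    ultimately show ?thesis using l_def
      by (smt (verit, ccfv_SIG) power2_less_0 zero_less_power2)
  qed
  have sq: "sqrt differentiable (at (S 0))"
    using DERIV_real_sqrt[OF Spos] real_differentiable_def by blast
  have c1: "(\<lambda>s. sqrt (S s)) differentiable (at 0)"
    using differentiable_chain_at[OF Sd sq] by (simp add: comp_def)
  have "sqrt (S 0) > 0" using Spos by simp
  hence c2: "phi differentiable (at (sqrt (S 0)))" by (rule Ckc_diff[OF phi])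
  have "(\<lambda>s. phi (sqrt (S s))) differentiable (at 0)"
    using differentiable_chain_at[OF c1 c2] by (simp add: comp_def)
  thus ?thesis by (simp add: pd)
qed



lemma Eset_union:
  fixes L x :: "real^'n"
  assumes "L$i > 0"
  shows "Eset L x i = (\<Union>m::int. {y. y$i = x$i - of_int m * L$i / 2})"
proof -
  have "2 * (x$i - y$i) / L$i = of_int m \<longleftrightarrow> y$i = x$i - of_int m * L$i / 2" for y m
    using assms by (auto simp: field_simps)
  thus ?thesis unfolding Eset_def by (auto elim!: Ints_cases)
qed

lemma hyper_null: "{y::real^'n. y$i = c} \<in> null_sets lebesgue"
proof -
  have "{y::real^'n. y$i = c} = {y. y \<bullet> axis i 1 = c}"
    by (simp add: inner_axis)
  moreover have "negligible {y::real^'n. y \<bullet> axis i 1 = c}"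
    by (rule negligible_standard_hyperplane) simp
  ultimately show ?thesis by (simp add: negligible_iff_null_sets)
qed

lemma Eset_null:
  fixes L x :: "real^'n"
  assumes "L$i > 0"
  shows "Eset L x i \<in> null_sets lebesgue"
  unfolding Eset_union[OF assms]
  by (rule null_sets_UN) (rule hyper_null)

lemma Eset_borel:
  fixes L x :: "real^'n"
  assumes "L$i > 0"
  shows "Eset L x i \<in> sets borel"
  unfolding Eset_union[OF assms]
proof -
  have "{y::real^'n. y$i = x$i - of_int m * L$i / 2} \<in> sets borel" for m :: int
    by (intro borel_closed closed_Collect_eq continuous_intros)
  thus "(\<Union>m::int. {y::real^'n. y$i = x$i - of_int m * L$i / 2}) \<in> sets borel"
    by (intro sets.countable_UN) auto
qed

lemma meas_ae_eq:
  fixes f g :: "'a::euclidean_space \<Rightarrow> real"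
  assumes g: "g \<in> borel_measurable lebesgue" and N: "N \<in> null_sets lebesgue"
    and eq: "\<And>y. y \<notin> N \<Longrightarrow> f y = g y"
  shows "f \<in> borel_measurable lebesgue"
proof (rule measurableI)
  fix A :: "real set" assume A: "A \<in> sets borel"
  have "AE y in lebesgue. y \<in> g -` A \<inter> space lebesgue \<longleftrightarrow> y \<in> f -` A \<inter> space lebesgue"
    using AE_not_in[OF N] by (rule eventually_mono) (simp add: eq)
  moreover have "g -` A \<inter> space lebesgue \<in> sets lebesgue"
    using g A by (rule measurable_sets)
  ultimately show "f -` A \<inter> space lebesgue \<in> sets lebesgue"
    by (rule completion.in_sets_AE) auto
qed auto

definition Kf :: "real^'n \<Rightarrow> (real \<Rightarrow> real) \<Rightarrow> real^'n \<Rightarrow> 'n \<Rightarrow> real \<Rightarrow> real^'n \<Rightarrow> real" where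
  "Kf L phi x i s y = phi (per_dist L (x + s *\<^sub>R axis i 1) y)"

definition gK :: "real^'n \<Rightarrow> (real \<Rightarrow> real) \<Rightarrow> real^'n \<Rightarrow> 'n \<Rightarrow> real^'n \<Rightarrow> real" where
  "gK L phi x i y = deriv (\<lambda>s. Kf L phi x i s y) 0"

lemma grad_gK: "grad (\<lambda>y. phi (per_dist L y x')) x $ i = gK L phi x i x'"
  by (simp add: grad_def gK_def Kf_def)

lemma Kf_cont:
  assumes box: "\<forall>j. L$j > 0" and phi: "Ckc p phi" "p \<ge> 2"
  shows "continuous_on UNIV (Kf L phi x i s)"
  unfolding Kf_def
  by (rule continuous_on_compose2[OF Ckc_cont[OF phi] continuous_per_dist[OF box]])
     (auto simp: per_dist_nonneg)

lemma Kf_meas: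
  assumes box: "\<forall>j. L$j > 0" and phi: "Ckc p phi" "p \<ge> 2"
  shows "Kf L phi x i s \<in> borel_measurable borel"
  by (rule borel_measurable_continuous_onI[OF Kf_cont[OF assms]])

lemma Kf_lip:
  assumes box: "\<forall>j. L$j > 0" and M: "\<forall>a\<ge>0. \<forall>b\<ge>0. \<bar>phi a - phi b\<bar> \<le> M * \<bar>a - b\<bar>" "M \<ge> 0"
  shows "\<bar>Kf L phi x i s y - Kf L phi x i 0 y\<bar> \<le> M * \<bar>s\<bar>"
proof -
  have "\<bar>Kf L phi x i s y - Kf L phi x i 0 y\<bar>
      \<le> M * \<bar>per_dist L (x + s *\<^sub>R axis i 1) y - per_dist L x y\<bar>"
    using M(1)[rule_format, OF per_dist_nonneg per_dist_nonneg, of L "x + s *\<^sub>R axis i 1" y L x y]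
    by (simp add: Kf_def)
  also have "\<dots> \<le> M * \<bar>s\<bar>"
    by (rule mult_left_mono[OF per_dist_axis[OF box] M(2)])
  finally show ?thesis .
qed

lemma gK_deriv:
  assumes box: "\<forall>j. L$j > 0" and phi: "Ckc p phi" "p \<ge> 2" and y: "y \<notin> Eset L x i"
  shows "((\<lambda>s. Kf L phi x i s y) has_real_derivative gK L phi x i y) (at 0)"
proof -
  have "(\<lambda>s. Kf L phi x i s y) differentiable (at 0)"
    unfolding Kf_def by (rule kernel_diff[OF box phi y])
  thus ?thesis unfolding gK_def by (simp add: DERIV_deriv_iff_real_differentiable)
qed

lemma gK_bound:
  assumes box: "\<forall>j. L$j > 0" and phi: "Ckc p phi" "p \<ge> 2" and y: "y \<notin> Eset L x i"
    and M: "\<forall>a\<ge>0. \<forall>b\<ge>0. \<bar>phi a - phi b\<bar> \<le> M * \<bar>a - b\<bar>" "M \<ge> 0"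
  shows "\<bar>gK L phi x i y\<bar> \<le> M"
proof -
  have "(\<lambda>h. (Kf L phi x i (0 + h) y - Kf L phi x i 0 y) / h) \<midarrow>0\<rightarrow> gK L phi x i y"
    using gK_deriv[OF box phi y] by (simp add: DERIV_def)
  hence t: "(\<lambda>h. \<bar>(Kf L phi x i (0 + h) y - Kf L phi x i 0 y) / h\<bar>) \<midarrow>0\<rightarrow> \<bar>gK L phi x i y\<bar>"
    by (rule tendsto_rabs)
  have b: "\<bar>(Kf L phi x i (0 + h) y - Kf L phi x i 0 y) / h\<bar> \<le> M" if "h \<noteq> 0" for h
  proof -
    have "\<bar>Kf L phi x i h y - Kf L phi x i 0 y\<bar> \<le> M * \<bar>h\<bar>" by (rule Kf_lip[OF box M])
    thus ?thesis using that by (simp add: abs_divide divide_le_eq)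
  qed
  have "\<forall>\<^sub>F h in at 0. \<bar>(Kf L phi x i (0 + h) y - Kf L phi x i 0 y) / h\<bar> \<le> M"
    unfolding eventually_at using b by (intro exI[of _ 1]) auto
  thus ?thesis using tendsto_upperbound[OF t] by simp
qed

lemma gK_meas:
  assumes box: "\<forall>j. L$j > 0" and phi: "Ckc p phi" "p \<ge> 2"
  shows "gK L phi x i \<in> borel_measurable lebesgue"
proof -
  let ?E = "Eset L x i"
  define Q where "Q y = (if y \<in> ?E then 0 else gK L phi x i y)" for y
  define Qn where "Qn n y = (if y \<in> ?E then 0 else
       (Kf L phi x i (0 + inverse (real (Suc n))) y - Kf L phi x i 0 y) / inverse (real (Suc n)))" for n y
  have Eb: "?E \<in> sets borel" using Eset_borel box by auto
  have "Qn n \<in> borel_measurable borel" for n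
  proof -
    have k1: "Kf L phi x i (0 + inverse (real (Suc n))) \<in> borel_measurable borel" by (rule Kf_meas[OF box phi])
    have k0: "Kf L phi x i 0 \<in> borel_measurable borel" by (rule Kf_meas[OF box phi])
    have "(\<lambda>y. (Kf L phi x i (0 + inverse (real (Suc n))) y - Kf L phi x i 0 y) / inverse (real (Suc n)))
        \<in> borel_measurable borel"
      by (intro borel_measurable_divide borel_measurable_diff k1 k0 borel_measurable_const)
    moreover have "?E \<inter> space borel \<in> sets borel" using Eb by simp
    ultimately show ?thesis unfolding Qn_def
      by (intro measurable_If_set) auto
  qed
  moreover have "(\<lambda>n. Qn n y) \<longlonglongrightarrow> Q y" for y
  proof (cases "y \<in> ?E")
    case True thus ?thesis by (simp add: Qn_def Q_def)
  next
    case False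
    have lim: "(\<lambda>h. (Kf L phi x i (0 + h) y - Kf L phi x i 0 y) / h) \<midarrow>0\<rightarrow> gK L phi x i y"
      using gK_deriv[OF box phi False] by (simp only: DERIV_def)
    have Xl: "(\<lambda>n. inverse (real (Suc n))) \<longlonglongrightarrow> 0"
      by (rule LIMSEQ_inverse_real_of_nat)
    have Xin: "\<forall>n. inverse (real (Suc n)) \<in> UNIV - {0}" by simp
    have "((\<lambda>h. (Kf L phi x i (0 + h) y - Kf L phi x i 0 y) / h) \<circ> (\<lambda>n. inverse (real (Suc n))))
        \<longlonglongrightarrow> gK L phi x i y"
      using lim[unfolded tendsto_at_iff_sequentially, rule_format, OF _ Xl] Xin by blast
    thus ?thesis unfolding Qn_def Q_def comp_def using False by (simp only: if_False)
  qed
  ultimately have "Q \<in> borel_measurable borel"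
    by (rule borel_measurable_LIMSEQ_real[where u=Qn, rotated])
  hence "Q \<in> borel_measurable lborel"
    by (subst measurable_cong_sets[OF sets_lborel refl])
  hence "Q \<in> borel_measurable lebesgue"
    by (rule measurable_completion)
  moreover have "Eset L x i \<in> null_sets lebesgue" using Eset_null box by blast
  moreover have "y \<notin> Eset L x i \<Longrightarrow> gK L phi x i y = Q y" for y by (simp add: Q_def)
  ultimately show ?thesis by (rule meas_ae_eq)
qed



lemma abs_le_1_sq: "\<bar>u::real\<bar> \<le> 1 + u^2"
proof (cases "\<bar>u\<bar> \<le> 1")
  case True thus ?thesis by (smt (verit) zero_le_power2)
next
  case False
  hence "1 \<le> \<bar>u\<bar>" by simp
  hence "\<bar>u\<bar> * 1 \<le> \<bar>u\<bar> * \<bar>u\<bar>" by (intro mult_left_mono) auto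
  hence h: "\<bar>u\<bar> \<le> \<bar>u\<bar> * \<bar>u\<bar>" by simp
  have e: "\<bar>u\<bar> * \<bar>u\<bar> = u^2" by (simp add: power2_eq_square)
  show ?thesis using h e by linarith
qed

lemma L2_integrable:
  assumes "finite_measure M" "L2_fun M u"
  shows "integrable M u"
proof (rule Bochner_Integration.integrable_bound)
  interpret finite_measure M by fact
  show "integrable M (\<lambda>z. 1 + (u z)^2)"
    using assms(2) unfolding L2_fun_def by (intro Bochner_Integration.integrable_add) auto
  show "u \<in> borel_measurable M" using assms(2) by (simp add: L2_fun_def)
  show "AE z in M. norm (u z) \<le> norm (1 + (u z)^2)"
    by (intro AE_I2) (simp add: abs_le_1_sq)
qed

lemma eps_sqrt:
  fixes X I m :: real
  assumes H: "\<And>e. e > 0 \<Longrightarrow> X \<le> (I / e + e * m) / 2" and I: "I \<ge> 0" and m: "m \<ge> 0"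
  shows "X \<le> sqrt m * sqrt I"
proof (cases "I > 0 \<and> m > 0")
  case True
  define e where "e = sqrt I / sqrt m"
  have e: "e > 0" using True by (simp add: e_def)
  have sI: "sqrt I * sqrt I = I" and sm: "sqrt m * sqrt m = m" using True by auto
  have "I / e = sqrt m * sqrt I" using True sI
    by (simp add: e_def field_simps)
  moreover have "e * m = sqrt m * sqrt I" using True sm
    by (simp add: e_def field_simps)
  ultimately show ?thesis using H[OF e] by (simp add: mult.commute)
next
  case False
  have "X \<le> 0"
  proof (cases "I = 0")
    case True
    show ?thesis
    proof (rule field_le_epsilon)
      fix d :: real assume d: "d > 0"
      show "X \<le> 0 + d"
      proof (cases "m = 0")
        case True thus ?thesis using H[of 1] \<open>I = 0\<close> d by simp
      next
        case False
        hence mp: "m > 0" using m by simp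
        have "X \<le> (I / (2*d/m) + (2*d/m) * m) / 2" using H[of "2*d/m"] d mp by simp
        thus ?thesis using \<open>I = 0\<close> mp by simp
      qed
    qed
  next
    case nI: False
    hence Ip: "I > 0" using I by simp
    hence m0: "m = 0" using False m by simp
    show ?thesis
    proof (rule field_le_epsilon)
      fix d :: real assume d: "d > 0"
      have "X \<le> (I / (I/(2*d)) + (I/(2*d)) * m) / 2" using H[of "I/(2*d)"] d Ip by simp
      thus "X \<le> 0 + d" using m0 Ip d by simp
    qed
  qed
  moreover have "0 \<le> sqrt m * sqrt I" using I m by simp
  ultimately show ?thesis by linarith
qed

lemma int_abs_L2:
  fixes g :: "'a \<Rightarrow> real"
  assumes fm: "finite_measure M" and g: "g \<in> borel_measurable M" and g2: "integrable M (\<lambda>z. (g z)^2)"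
  shows "(\<integral>z. \<bar>g z\<bar> \<partial>M) \<le> sqrt (measure M (space M)) * sqrt (\<integral>z. (g z)^2 \<partial>M)"
proof (rule eps_sqrt)
  interpret finite_measure M by fact
  fix e :: real assume e: "e > 0"
  have ab: "\<bar>g z\<bar> \<le> ((g z)^2 / e + e) / 2" for z
  proof -
    have "0 \<le> (\<bar>g z\<bar> - e)^2" by simp
    hence "2 * e * \<bar>g z\<bar> \<le> (g z)^2 + e^2" by (simp add: power2_eq_square algebra_simps abs_mult_self_eq)
    thus ?thesis using e by (simp add: field_simps power2_eq_square)
  qed
  have i1: "integrable M (\<lambda>z. ((g z)^2 / e + e) / 2)"
    using g2 by (intro Bochner_Integration.integrable_divide Bochner_Integration.integrable_add) auto
  have "(\<integral>z. \<bar>g z\<bar> \<partial>M) \<le> (\<integral>z. ((g z)^2 / e + e) / 2 \<partial>M)"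
  proof (rule integral_mono)
    show "integrable M (\<lambda>z. \<bar>g z\<bar>)"
    proof (rule Bochner_Integration.integrable_bound[OF i1])
      show "(\<lambda>z. \<bar>g z\<bar>) \<in> borel_measurable M" using g by measurable
      have nn: "0 \<le> ((g z)^2 / e + e) / 2" for z using e by simp
      show "AE z in M. norm \<bar>g z\<bar> \<le> norm (((g z)^2 / e + e) / 2)"
        using ab nn by (intro AE_I2) (simp only: real_norm_def abs_abs abs_of_nonneg)
    qed
  qed (use i1 ab in auto)
  also have "\<dots> = ((\<integral>z. (g z)^2 \<partial>M) / e + e * measure M (space M)) / 2"
    using g2 by (simp add: Bochner_Integration.integral_add mult.commute)
  finally show "(\<integral>z. \<bar>g z\<bar> \<partial>M) \<le> ((\<integral>z. (g z)^2 \<partial>M) / e + e * measure M (space M)) / 2" .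
qed auto

lemma unitv_lip:
  fixes a b :: "'a::real_normed_vector"
  assumes a: "norm a \<ge> xi" "xi > 0"
  shows "norm (a /\<^sub>R norm a - b /\<^sub>R norm b) \<le> 2 / xi * norm (a - b)"
proof -
  define na where "na = norm a"
  define nb where "nb = norm b"
  have na: "na > 0" using a na_def by linarith
  have t1: "norm (a /\<^sub>R na - b /\<^sub>R na) = norm (a - b) / na"
  proof -
    have "a /\<^sub>R na - b /\<^sub>R na = (a - b) /\<^sub>R na" by (simp add: scaleR_diff_right)
    hence "norm (a /\<^sub>R na - b /\<^sub>R na) = inverse na * norm (a - b)" using na by simp
    thus ?thesis by (simp add: divide_inverse mult.commute)
  qed
  have t2: "norm (b /\<^sub>R na - b /\<^sub>R nb) \<le> norm (a - b) / na"
  proof (cases "b = 0")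
    case True thus ?thesis using na by simp
  next
    case False
    hence nb: "nb > 0" by (simp add: nb_def)
    have "b /\<^sub>R na - b /\<^sub>R nb = (inverse na - inverse nb) *\<^sub>R b"
      by (simp add: scaleR_diff_left)
    hence "norm (b /\<^sub>R na - b /\<^sub>R nb) = \<bar>inverse na - inverse nb\<bar> * nb"
      by (simp add: nb_def)
    also have "(inverse na - inverse nb) * nb = (nb - na) / na"
      using na nb by (simp add: field_simps)
    hence "\<bar>inverse na - inverse nb\<bar> * nb = \<bar>nb - na\<bar> / na"
      using na nb by (metis abs_divide abs_mult abs_of_pos)
    also have "\<bar>nb - na\<bar> \<le> norm (a - b)"
      unfolding na_def nb_def by (metis norm_triangle_ineq3 norm_minus_commute)
    hence "\<bar>nb - na\<bar> / na \<le> norm (a - b) / na"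
      using na by (intro divide_right_mono) auto
    finally show ?thesis .
  qed
  have "norm (a /\<^sub>R na - b /\<^sub>R nb)
      \<le> norm (a /\<^sub>R na - b /\<^sub>R na) + norm (b /\<^sub>R na - b /\<^sub>R nb)"
    using norm_triangle_ineq[of "a /\<^sub>R na - b /\<^sub>R na" "b /\<^sub>R na - b /\<^sub>R nb"] by simp
  also have "\<dots> \<le> 2 * norm (a - b) / na" using t1 t2 by simp
  also have "\<dots> \<le> 2 * norm (a - b) / xi"
    using a na na_def by (intro divide_left_mono) auto
  finally show ?thesis by (simp add: na_def nb_def)
qed



lemma leb_fst_meas:
  fixes h :: "real^'n \<Rightarrow> real"
  assumes "h \<in> borel_measurable lebesgue"
  shows "(\<lambda>z. h (fst z)) \<in> borel_measurable (lebesgue_on S \<Otimes>\<^sub>M N)"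
proof -
  have "h \<in> borel_measurable (lebesgue_on S)" using assms by (rule measurable_restrict_space1)
  thus ?thesis by (rule measurable_compose[OF measurable_fst])
qed

lemma borel_leb:
  fixes h :: "real^'n \<Rightarrow> real"
  assumes "h \<in> borel_measurable borel"
  shows "h \<in> borel_measurable lebesgue"
proof -
  have "h \<in> borel_measurable lborel"
    using assms by (subst measurable_cong_sets[OF sets_lborel refl])
  thus ?thesis by (rule measurable_completion)
qed

lemma cont_kernel_meas:
  fixes L x :: "real^'n"
  assumes box: "\<forall>j. L$j > 0" and k: "Ckc p kk" "p \<ge> 2"
  shows "(\<lambda>z. kk (per_dist L x (fst z))) \<in> borel_measurable (lebesgue_on S \<Otimes>\<^sub>M N)"
proof -
  have "continuous_on UNIV (\<lambda>y. kk (per_dist L x y))"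
    by (rule continuous_on_compose2[OF Ckc_cont[OF k] continuous_per_dist[OF box]])
       (auto simp: per_dist_nonneg)
  hence "(\<lambda>y. kk (per_dist L x y)) \<in> borel_measurable borel"
    by (rule borel_measurable_continuous_onI)
  thus ?thesis by (intro leb_fst_meas borel_leb)
qed

lemma phase_fun_meas:
  "L2_fun (phase_measure L) (\<lambda>z. f (fst z) (snd z)) \<Longrightarrow>
   (\<lambda>z. f (fst z) (snd z)) \<in> borel_measurable (lebesgue_on (torus_box L) \<Otimes>\<^sub>M sphere_measure)"
  by (simp add: L2_fun_def phase_measure_def)

lemma J_diff:
  fixes L x :: "real^'n" and f fh :: "real^'n \<Rightarrow> real^'n \<Rightarrow> real"
  assumes box: "\<forall>j. L$j > 0" and k: "Ckc p kk" "p \<ge> 2" and Kb: "\<forall>r\<ge>0. \<bar>kk r\<bar> \<le> Kb"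
    and Lf: "L2_fun (phase_measure L) (\<lambda>z. f (fst z) (snd z))"
    and Lh: "L2_fun (phase_measure L) (\<lambda>z. fh (fst z) (snd z))"
  shows "norm (J_f L kk f x - J_h L kk fh x)
         \<le> Kb * (\<integral>z. \<bar>f (fst z) (snd z) - fh (fst z) (snd z)\<bar> \<partial>phase_measure L)"
proof -
  let ?B = "lebesgue_on (torus_box L)"
  let ?S = "sphere_measure :: (real^'n) measure"
  let ?P = "?B \<Otimes>\<^sub>M ?S"
  interpret P: pair_sigma_finite ?B ?S by (rule pair_sf)
  have PP: "phase_measure L = ?P" by (simp add: phase_measure_def)
  define K where "K z = kk (per_dist L x (fst z))" for z :: "(real^'n) \<times> (real^'n)"
  define F where "F z = f (fst z) (snd z)" for z :: "(real^'n) \<times> (real^'n)"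
  define H where "H z = fh (fst z) (snd z)" for z :: "(real^'n) \<times> (real^'n)"
  have Km[measurable]: "K \<in> borel_measurable ?P" unfolding K_def by (rule cont_kernel_meas[OF box k])
  have Fm[measurable]: "F \<in> borel_measurable ?P" unfolding F_def by (rule phase_fun_meas[OF Lf])
  have Hm[measurable]: "H \<in> borel_measurable ?P" unfolding H_def by (rule phase_fun_meas[OF Lh])
  have Kbd: "\<bar>K z\<bar> \<le> Kb" for z unfolding K_def using Kb per_dist_nonneg by blast
  have Fi: "integrable ?P F" unfolding F_def using L2_integrable[OF phase_finite Lf] by (simp add: PP)
  have Hi: "integrable ?P H" unfolding H_def using L2_integrable[OF phase_finite Lh] by (simp add: PP)
  have AEn: "AE z in ?P. norm (snd z) \<le> 1" using phase_AE_norm[of L] unfolding phase_measure_def .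
  have vint: "integrable ?P (\<lambda>z. (K z * G z) *\<^sub>R snd z)"
    if Gm: "G \<in> borel_measurable ?P" and Gi: "integrable ?P G" for G
  proof (rule Bochner_Integration.integrable_bound)
    show "integrable ?P (\<lambda>z. Kb * G z)" using Gi by simp
    show "(\<lambda>z. (K z * G z) *\<^sub>R snd z) \<in> borel_measurable ?P" using Gm by measurable
    show "AE z in ?P. norm ((K z * G z) *\<^sub>R snd z) \<le> norm (Kb * G z)"
      using AEn
    proof eventually_elim
      case (elim z)
      have "norm ((K z * G z) *\<^sub>R snd z) = \<bar>K z\<bar> * \<bar>G z\<bar> * norm (snd z)" by (simp add: abs_mult)
      also have "\<dots> \<le> Kb * \<bar>G z\<bar> * 1"
        using elim Kbd[of z] by (intro mult_mono) auto
      also have "\<dots> \<le> norm (Kb * G z)" using abs_ge_self[of Kb] by (simp add: abs_mult mult_right_mono)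
      finally show ?case .
    qed
  qed
  have Dm: "(\<lambda>z. F z - H z) \<in> borel_measurable ?P" by measurable
  have Di: "integrable ?P (\<lambda>z. F z - H z)" using Fi Hi by (rule Bochner_Integration.integrable_diff)
  have Jh: "J_h L kk fh x = (\<integral>z. (K z * H z) *\<^sub>R snd z \<partial>?P)"
  proof -
    have "J_h L kk fh x = (\<integral>x'. (\<integral>v. (kk (per_dist L x x') * fh x' v) *\<^sub>R v \<partial>?S) \<partial>?B)"
      unfolding J_h_def rhou_h_def
    proof (intro Bochner_Integration.integral_cong refl)
      fix x' :: "real^'n"
      have "(\<integral>v. (kk (per_dist L x x') * fh x' v) *\<^sub>R v \<partial>?S)
          = (\<integral>v. kk (per_dist L x x') *\<^sub>R (fh x' v *\<^sub>R v) \<partial>?S)" (is "_ = ?r") by simp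
      moreover have "?r = kk (per_dist L x x') *\<^sub>R (\<integral>v. fh x' v *\<^sub>R v \<partial>?S)"
        by (rule integral_scaleR_right)
      ultimately show "kk (per_dist L x x') *\<^sub>R (\<integral>v. fh x' v *\<^sub>R v \<partial>?S)
          = (\<integral>v. (kk (per_dist L x x') * fh x' v) *\<^sub>R v \<partial>?S)" by simp
    qed
    also have "\<dots> = (\<integral>z. (K z * H z) *\<^sub>R snd z \<partial>?P)"
      using P.integral_fst'[OF vint[OF Hm Hi]] by (simp add: K_def H_def)
    finally show ?thesis .
  qed
  have Jf: "J_f L kk f x = (\<integral>z. (K z * F z) *\<^sub>R snd z \<partial>?P)"
    by (simp add: J_f_def PP K_def F_def)
  have "J_f L kk f x - J_h L kk fh x = (\<integral>z. (K z * F z) *\<^sub>R snd z - (K z * H z) *\<^sub>R snd z \<partial>?P)"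
    using Bochner_Integration.integral_diff[OF vint[OF Fm Fi] vint[OF Hm Hi]] Jf Jh by simp
  also have "\<dots> = (\<integral>z. (K z * (F z - H z)) *\<^sub>R snd z \<partial>?P)"
    by (intro Bochner_Integration.integral_cong refl) (simp add: right_diff_distrib scaleR_diff_left)
  finally have eq: "J_f L kk f x - J_h L kk fh x = (\<integral>z. (K z * (F z - H z)) *\<^sub>R snd z \<partial>?P)" .
  have "norm (J_f L kk f x - J_h L kk fh x) \<le> (\<integral>z. norm ((K z * (F z - H z)) *\<^sub>R snd z) \<partial>?P)"
    unfolding eq by (rule integral_norm_bound)
  also have "\<dots> \<le> (\<integral>z. Kb * \<bar>F z - H z\<bar> \<partial>?P)"
  proof (rule integral_mono_AE)
    show "integrable ?P (\<lambda>z. norm ((K z * (F z - H z)) *\<^sub>R snd z))"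
      by (rule integrable_norm[OF vint[OF Dm Di]])
    show "integrable ?P (\<lambda>z. Kb * \<bar>F z - H z\<bar>)"
      using integrable_abs[OF Di] by simp
    show "AE z in ?P. norm ((K z * (F z - H z)) *\<^sub>R snd z) \<le> Kb * \<bar>F z - H z\<bar>"
      using AEn
    proof eventually_elim
      case (elim z)
      have "norm ((K z * (F z - H z)) *\<^sub>R snd z) = \<bar>K z\<bar> * \<bar>F z - H z\<bar> * norm (snd z)" by (simp add: abs_mult)
      also have "\<dots> \<le> Kb * \<bar>F z - H z\<bar> * 1"
        using elim Kbd[of z] by (intro mult_mono) auto
      finally show ?case by simp
    qed
  qed
  also have "\<dots> = Kb * (\<integral>z. \<bar>F z - H z\<bar> \<partial>?P)" by simp
  finally show ?thesis by (simp add: PP F_def H_def)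
qed



lemma AE_not_E:
  fixes L x :: "real^'n"
  assumes box: "\<forall>j. L$j > 0"
  shows "AE z in (lebesgue_on (torus_box L) \<Otimes>\<^sub>M (sphere_measure :: (real^'n) measure)). fst z \<notin> Eset L x i"
proof (rule pair_sigma_finite.AE_pair_measure[OF pair_sf])
  have Eb: "Eset L x i \<in> sets borel" using Eset_borel box by blast
  have El: "Eset L x i \<in> sets lebesgue" using Eb by (metis sets_lborel sets_completionI_sets)
  have bs: "torus_box L \<inter> space lebesgue \<in> sets lebesgue" using box_lebesgue by simp
  have EB: "Eset L x i \<inter> torus_box L \<in> sets (lebesgue_on (torus_box L))"
    using iffD2[OF sets_restrict_space_iff[OF bs]] conjI[OF Int_lower2 sets.Int[OF El box_lebesgue]]
    by blast
  have "(\<lambda>z. fst z) \<in> (lebesgue_on (torus_box L) \<Otimes>\<^sub>M (sphere_measure :: (real^'n) measure)) \<rightarrow>\<^sub>M lebesgue_on (torus_box L)"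
    by (rule measurable_fst)
  hence Ym: "(\<lambda>z. fst z) -` (Eset L x i \<inter> torus_box L) \<inter> space (lebesgue_on (torus_box L) \<Otimes>\<^sub>M (sphere_measure :: (real^'n) measure))
         \<in> sets (lebesgue_on (torus_box L) \<Otimes>\<^sub>M (sphere_measure :: (real^'n) measure))"
    using EB by (rule measurable_sets)
  have eqS: "{z \<in> space (lebesgue_on (torus_box L) \<Otimes>\<^sub>M (sphere_measure :: (real^'n) measure)). fst z \<notin> Eset L x i}
     = space (lebesgue_on (torus_box L) \<Otimes>\<^sub>M (sphere_measure :: (real^'n) measure))
       - (\<lambda>z. fst z) -` (Eset L x i \<inter> torus_box L) \<inter> space (lebesgue_on (torus_box L) \<Otimes>\<^sub>M (sphere_measure :: (real^'n) measure))"
    by (auto simp: space_pair_measure)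
  show "{z \<in> space (lebesgue_on (torus_box L) \<Otimes>\<^sub>M (sphere_measure :: (real^'n) measure)). fst z \<notin> Eset L x i}
         \<in> sets (lebesgue_on (torus_box L) \<Otimes>\<^sub>M (sphere_measure :: (real^'n) measure))"
    unfolding eqS by (rule sets.compl_sets[OF Ym])
  have "AE y in lebesgue. y \<in> torus_box L \<longrightarrow> y \<notin> Eset L x i"
    by (rule eventually_mono[OF AE_not_in[OF Eset_null]]) (use box in auto)
  hence "AE y in lebesgue_on (torus_box L). y \<notin> Eset L x i"
    using AE_restrict_space_iff[OF bs] by blast
  thus "AE y in lebesgue_on (torus_box L). AE v in (sphere_measure :: (real^'n) measure). fst (y, v) \<notin> Eset L x i"
    by (rule eventually_mono) simp
qed



lemma R_diff:
  fixes L x :: "real^'n" and f fh :: "real^'n \<Rightarrow> real^'n \<Rightarrow> real"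
  assumes box: "\<forall>j. L$j > 0" and phi: "Ckc p phi" "p \<ge> 2"
    and M: "\<forall>a\<ge>0. \<forall>b\<ge>0. \<bar>phi a - phi b\<bar> \<le> M * \<bar>a - b\<bar>" "M \<ge> 0"
    and Pb: "\<forall>r\<ge>0. \<bar>phi r\<bar> \<le> Pb"
    and Lf: "L2_fun (phase_measure L) (\<lambda>z. f (fst z) (snd z))"
    and Lh: "L2_fun (phase_measure L) (\<lambda>z. fh (fst z) (snd z))"
  shows "norm (R_f L phi f x - R_h L phi fh x)
         \<le> of_nat CARD('n) * M * (\<integral>z. \<bar>f (fst z) (snd z) - fh (fst z) (snd z)\<bar> \<partial>phase_measure L)"
proof -
  let ?B = "lebesgue_on (torus_box L)"
  let ?S = "sphere_measure :: (real^'n) measure"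
  let ?P = "?B \<Otimes>\<^sub>M ?S"
  interpret P: pair_sigma_finite ?B ?S by (rule pair_sf)
  have PP: "phase_measure L = ?P" by (simp add: phase_measure_def)
  define F where "F z = f (fst z) (snd z)" for z :: "(real^'n) \<times> (real^'n)"
  define H where "H z = fh (fst z) (snd z)" for z :: "(real^'n) \<times> (real^'n)"
  have Fm[measurable]: "F \<in> borel_measurable ?P" unfolding F_def by (rule phase_fun_meas[OF Lf])
  have Hm[measurable]: "H \<in> borel_measurable ?P" unfolding H_def by (rule phase_fun_meas[OF Lh])
  have Fi: "integrable ?P F" unfolding F_def using L2_integrable[OF phase_finite Lf] by (simp add: PP)
  have Hi: "integrable ?P H" unfolding H_def using L2_integrable[OF phase_finite Lh] by (simp add: PP)
  have Di: "integrable ?P (\<lambda>z. F z - H z)" using Fi Hi by (rule Bochner_Integration.integrable_diff)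
  have comp: "\<bar>(R_f L phi f x - R_h L phi fh x) $ i\<bar> \<le> M * (\<integral>z. \<bar>F z - H z\<bar> \<partial>?P)" for i
  proof -
    define g where "g y = gK L phi x i y" for y
    have gm: "g \<in> borel_measurable lebesgue" unfolding g_def by (rule gK_meas[OF box phi])
    have gfm[measurable]: "(\<lambda>z. g (fst z)) \<in> borel_measurable ?P" by (rule leb_fst_meas[OF gm])
    have gAE: "AE z in ?P. \<bar>g (fst z)\<bar> \<le> M"
      using AE_not_E[OF box, of x i] by eventually_elim (simp add: g_def gK_bound[OF box phi _ M])
    have gint: "integrable ?P (\<lambda>z. g (fst z) * G z)"
      if Gm: "G \<in> borel_measurable ?P" and Gi: "integrable ?P G" for G
    proof (rule Bochner_Integration.integrable_bound)
      show "integrable ?P (\<lambda>z. M * G z)" using Gi by simp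
      show "(\<lambda>z. g (fst z) * G z) \<in> borel_measurable ?P" using Gm by measurable
      show "AE z in ?P. norm (g (fst z) * G z) \<le> norm (M * G z)"
        using gAE
      proof eventually_elim
        case (elim z)
        have "norm (g (fst z) * G z) = \<bar>g (fst z)\<bar> * \<bar>G z\<bar>" by (simp add: abs_mult)
        also have "\<dots> \<le> M * \<bar>G z\<bar>" using elim by (intro mult_right_mono) auto
        also have "\<dots> = norm (M * G z)" using M(2) by (simp add: abs_mult)
        finally show ?case .
      qed
    qed
    have Kfm: "(\<lambda>z. Kf L phi x i s (fst z)) \<in> borel_measurable ?P" for s
      by (rule leb_fst_meas[OF borel_leb[OF Kf_meas[OF box phi]]])
    have der: "((\<lambda>s. \<integral>z. Kf L phi x i s (fst z) * F z \<partial>?P) has_real_derivative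
                 (\<integral>z. g (fst z) * F z \<partial>?P)) (at 0)"
    proof (rule deriv_integral[where w="\<lambda>z. M * \<bar>F z\<bar>"])
      show "(\<lambda>z. Kf L phi x i s (fst z) * F z) \<in> borel_measurable ?P" for s
        using Kfm[of s] Fm by (rule borel_measurable_times)
      show "integrable ?P (\<lambda>z. Kf L phi x i 0 (fst z) * F z)"
      proof (rule Bochner_Integration.integrable_bound)
        show "integrable ?P (\<lambda>z. Pb * F z)" using Fi by simp
        show "(\<lambda>z. Kf L phi x i 0 (fst z) * F z) \<in> borel_measurable ?P"
          using Kfm[of 0] Fm by (rule borel_measurable_times)
        show "AE z in ?P. norm (Kf L phi x i 0 (fst z) * F z) \<le> norm (Pb * F z)"
        proof (rule AE_I2)
          fix z :: "(real^'n) \<times> (real^'n)"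
          have kb: "\<bar>Kf L phi x i 0 (fst z)\<bar> \<le> Pb" unfolding Kf_def using Pb per_dist_nonneg by blast
          have "norm (Kf L phi x i 0 (fst z) * F z) = \<bar>Kf L phi x i 0 (fst z)\<bar> * \<bar>F z\<bar>" by (simp add: abs_mult)
          also have "\<dots> \<le> Pb * \<bar>F z\<bar>" using kb by (intro mult_right_mono) auto
          also have "\<dots> \<le> norm (Pb * F z)" using abs_ge_self[of Pb] by (simp add: abs_mult mult_right_mono)
          finally show "norm (Kf L phi x i 0 (fst z) * F z) \<le> norm (Pb * F z)" .
        qed
      qed
      show "integrable ?P (\<lambda>z. M * \<bar>F z\<bar>)" using integrable_abs[OF Fi] by simp
      show "\<bar>Kf L phi x i s (fst z) * F z - Kf L phi x i 0 (fst z) * F z\<bar> \<le> \<bar>s\<bar> * (M * \<bar>F z\<bar>)" for s and z :: "(real^'n) \<times> (real^'n)"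
      proof -
        have "\<bar>Kf L phi x i s (fst z) * F z - Kf L phi x i 0 (fst z) * F z\<bar>
            = \<bar>Kf L phi x i s (fst z) - Kf L phi x i 0 (fst z)\<bar> * \<bar>F z\<bar>"
          by (simp add: abs_mult left_diff_distrib[symmetric])
        also have "\<dots> \<le> (M * \<bar>s\<bar>) * \<bar>F z\<bar>" by (intro mult_right_mono Kf_lip[OF box M]) auto
        finally show ?thesis by (simp add: mult_ac)
      qed
      show "AE z in ?P. ((\<lambda>s. Kf L phi x i s (fst z) * F z) has_real_derivative g (fst z) * F z) (at 0)"
        using AE_not_E[OF box, of x i]
        by eventually_elim (unfold g_def, rule DERIV_cmult_right, rule gK_deriv[OF box phi])
      show "(\<lambda>z. g (fst z) * F z) \<in> borel_measurable ?P" using gfm Fm by (rule borel_measurable_times)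
    qed
    have Rf: "(R_f L phi f x) $ i = - (\<integral>z. g (fst z) * F z \<partial>?P)"
    proof -
      have "(R_f L phi f x) $ i = - deriv (\<lambda>s. \<integral>z. Kf L phi x i s (fst z) * F z \<partial>?P) 0"
        by (simp add: R_f_def grad_def Kf_def F_def PP)
      also have "deriv (\<lambda>s. \<integral>z. Kf L phi x i s (fst z) * F z \<partial>?P) 0 = (\<integral>z. g (fst z) * F z \<partial>?P)"
        by (rule DERIV_imp_deriv[OF der])
      finally show ?thesis .
    qed
    have rho_int: "integrable ?B (rho_h fh)"
    proof -
      have "integrable ?B (\<lambda>x'. \<integral>v. H (x', v) \<partial>?S)" by (rule P.integrable_fst'[OF Hi])
      thus ?thesis by (simp add: rho_h_def[abs_def] H_def)
    qed
    have Rh: "(R_h L phi fh x) $ i = - (\<integral>z. g (fst z) * H z \<partial>?P)"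
    proof -
      define V where "V x' = rho_h fh x' *\<^sub>R grad (\<lambda>y. phi (per_dist L y x')) x" for x'
      have Vc: "V x' $ j = rho_h fh x' * gK L phi x j x'" for x' j
        by (simp add: V_def grad_gK)
      have Vi: "integrable ?B V"
      proof (subst integrable_iff_component[OF box_lebesgue], intro allI)
        fix j
        have gjm: "gK L phi x j \<in> borel_measurable ?B"
          by (rule measurable_restrict_space1[OF gK_meas[OF box phi]])
        have rm: "rho_h fh \<in> borel_measurable ?B" using rho_int by auto
        show "integrable ?B (\<lambda>x'. V x' $ j)"
          unfolding Vc
        proof (rule Bochner_Integration.integrable_bound)
          show "integrable ?B (\<lambda>x'. rho_h fh x' * M)" using rho_int by simp
          show "(\<lambda>x'. rho_h fh x' * gK L phi x j x') \<in> borel_measurable ?B"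
            using rm gjm by (rule borel_measurable_times)
          have "AE y in lebesgue. y \<in> torus_box L \<longrightarrow> y \<notin> Eset L x j"
            by (rule eventually_mono[OF AE_not_in[OF Eset_null]]) (use box in auto)
          hence "AE y in ?B. y \<notin> Eset L x j"
          proof -
            have bs: "torus_box L \<inter> space lebesgue \<in> sets lebesgue" using box_lebesgue by simp
            show ?thesis using AE_restrict_space_iff[OF bs] \<open>AE y in lebesgue. y \<in> torus_box L \<longrightarrow> y \<notin> Eset L x j\<close> by blast
          qed
          thus "AE x' in ?B. norm (rho_h fh x' * gK L phi x j x') \<le> norm (rho_h fh x' * M)"
          proof eventually_elim
            case (elim y)
            have "\<bar>gK L phi x j y\<bar> \<le> M" by (rule gK_bound[OF box phi elim M])
            hence "\<bar>rho_h fh y\<bar> * \<bar>gK L phi x j y\<bar> \<le> \<bar>rho_h fh y\<bar> * \<bar>M\<bar>"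
              by (intro mult_left_mono) auto
            thus ?case by (simp add: abs_mult)
          qed
        qed
      qed
      have "(R_h L phi fh x) $ i = - ((\<integral>x'. V x' \<partial>?B) $ i)"
        by (simp add: R_h_def V_def)
      also have "(\<integral>x'. V x' \<partial>?B) $ i = (\<integral>x'. V x' $ i \<partial>?B)"
        by (rule integral_bounded_linear[OF bounded_linear_vec_nth Vi, symmetric])
      also have "\<dots> = (\<integral>x'. (\<integral>v. H (x', v) * g x' \<partial>?S) \<partial>?B)"
        by (intro Bochner_Integration.integral_cong refl) (simp add: Vc rho_h_def H_def g_def)
      also have "\<dots> = (\<integral>z. H z * g (fst z) \<partial>?P)"
      proof -
        have "integrable ?P (\<lambda>z. H z * g (fst z))"
          using gint[OF Hm Hi] by (simp add: mult.commute)
        from P.integral_fst'[OF this] show ?thesis by simp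
      qed
      finally show ?thesis by (simp add: mult.commute)
    qed
    have "(R_f L phi f x - R_h L phi fh x) $ i = - (\<integral>z. g (fst z) * (F z - H z) \<partial>?P)"
    proof -
      have "(\<integral>z. g (fst z) * (F z - H z) \<partial>?P) = (\<integral>z. g (fst z) * F z - g (fst z) * H z \<partial>?P)"
        by (simp add: right_diff_distrib)
      also have "\<dots> = (\<integral>z. g (fst z) * F z \<partial>?P) - (\<integral>z. g (fst z) * H z \<partial>?P)"
        by (rule Bochner_Integration.integral_diff[OF gint[OF Fm Fi] gint[OF Hm Hi]])
      finally show ?thesis using Rf Rh by simp
    qed
    hence "\<bar>(R_f L phi f x - R_h L phi fh x) $ i\<bar> = \<bar>\<integral>z. g (fst z) * (F z - H z) \<partial>?P\<bar>" by simp
    also have "\<dots> \<le> (\<integral>z. \<bar>g (fst z) * (F z - H z)\<bar> \<partial>?P)"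
      by (rule integral_abs_bound)
    also have "\<dots> \<le> (\<integral>z. M * \<bar>F z - H z\<bar> \<partial>?P)"
    proof (rule integral_mono_AE)
      show "integrable ?P (\<lambda>z. \<bar>g (fst z) * (F z - H z)\<bar>)"
        by (rule integrable_abs[OF gint]) (use Di in auto)
      show "integrable ?P (\<lambda>z. M * \<bar>F z - H z\<bar>)" using integrable_abs[OF Di] by simp
      show "AE z in ?P. \<bar>g (fst z) * (F z - H z)\<bar> \<le> M * \<bar>F z - H z\<bar>"
        using gAE by eventually_elim (simp add: abs_mult mult_right_mono)
    qed
    also have "\<dots> = M * (\<integral>z. \<bar>F z - H z\<bar> \<partial>?P)" by simp
    finally show ?thesis .
  qed
  have "norm (R_f L phi f x - R_h L phi fh x) \<le> (\<Sum>i\<in>UNIV. \<bar>(R_f L phi f x - R_h L phi fh x) $ i\<bar>)"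
    by (rule norm_le_l1_cart)
  also have "\<dots> \<le> (\<Sum>i\<in>(UNIV::'n set). M * (\<integral>z. \<bar>F z - H z\<bar> \<partial>?P))"
    by (intro sum_mono comp)
  also have "\<dots> = of_nat CARD('n) * M * (\<integral>z. \<bar>F z - H z\<bar> \<partial>?P)" by simp
  finally show ?thesis by (simp add: PP F_def H_def)
qed



lemma diff_sq_int:
  assumes "L2_fun M u" "L2_fun M w"
  shows "integrable M (\<lambda>z. (u z - w z)^2)"
proof (rule Bochner_Integration.integrable_bound)
  show "integrable M (\<lambda>z. 2 * (u z)^2 + 2 * (w z)^2)"
    using assms unfolding L2_fun_def by (intro Bochner_Integration.integrable_add) auto
  show "(\<lambda>z. (u z - w z)^2) \<in> borel_measurable M" using assms unfolding L2_fun_def by (intro borel_measurable_power borel_measurable_diff) auto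
  show "AE z in M. norm ((u z - w z)^2) \<le> norm (2 * (u z)^2 + 2 * (w z)^2)"
  proof (rule AE_I2)
    fix z
    have "0 \<le> (u z + w z)^2" by simp
    hence "(u z - w z)^2 \<le> 2 * (u z)^2 + 2 * (w z)^2" by (simp add: power2_eq_square algebra_simps)
    thus "norm ((u z - w z)^2) \<le> norm (2 * (u z)^2 + 2 * (w z)^2)" by simp
  qed
qed

theorem mainTheorem6:
  fixes L :: "real^'n" and kk phi :: "real \<Rightarrow> real" and p :: nat and \<xi> :: real
  assumes dim: "CARD('n) \<ge> 2"
    and box: "\<forall>i. L$i > 0"
    and H0: "p \<ge> 2" "Ckc p kk" "Ckc p phi" "\<forall>r\<ge>0. kk r \<ge> 0" "\<forall>r\<ge>0. phi r \<ge> 0"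
    and xi: "\<xi> > 0"
  shows "\<exists>C>0. \<forall>T>0. \<forall>(f :: real \<Rightarrow> real^'n \<Rightarrow> real^'n \<Rightarrow> real) fh.
     ((\<forall>t\<in>{0..T}. L2_fun (phase_measure L) (\<lambda>z. f t (fst z) (snd z))) \<and>
      (\<forall>t\<in>{0..T}. \<forall>x\<in>torus_box L. norm (J_f L kk (f t) x + R_f L phi (f t) x) \<ge> \<xi>) \<and>
      (\<forall>t\<in>{0..T}. L2_fun (phase_measure L) (\<lambda>z. fh t (fst z) (snd z))) \<and>
      (\<forall>t\<in>{0..T}. \<forall>x\<in>torus_box L. J_h L kk (fh t) x + R_h L phi (fh t) x \<noteq> 0))
     \<longrightarrow> (\<forall>t\<in>{0..T}. AE x in lebesgue_on (torus_box L).
            norm (v_f L kk phi (f t) x - v_h L kk phi (fh t) x) \<le> C * L2_dist L (f t) (fh t))"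
proof -
  obtain Kb where Kb: "Kb \<ge> 0" "\<forall>r\<ge>0. \<bar>kk r\<bar> \<le> Kb" using Ckc_bound[OF H0(2,1)] by blast
  obtain M where M: "M \<ge> 0" "\<forall>a\<ge>0. \<forall>b\<ge>0. \<bar>phi a - phi b\<bar> \<le> M * \<bar>a - b\<bar>"
    using Ckc_lip[OF H0(3,1)] by blast
  obtain Pb where Pb: "Pb \<ge> 0" "\<forall>r\<ge>0. \<bar>phi r\<bar> \<le> Pb" using Ckc_bound[OF H0(3,1)] by blast
  define mu where "mu = measure (phase_measure L) (space (phase_measure L))"
  define C0 where "C0 = 2 / \<xi> * (Kb + of_nat CARD('n) * M) * sqrt mu"
  have C0: "C0 \<ge> 0" unfolding C0_def mu_def using Kb M xi by simp
  define C where "C = C0 + 1"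
  have Cpos: "C > 0" using C0 by (simp add: C_def)
  have key: "norm (v_f L kk phi F x - v_h L kk phi G x) \<le> C * L2_dist L F G"
    if LF: "L2_fun (phase_measure L) (\<lambda>z. F (fst z) (snd z))"
      and LG: "L2_fun (phase_measure L) (\<lambda>z. G (fst z) (snd z))"
      and nx: "norm (J_f L kk F x + R_f L phi F x) \<ge> \<xi>" for F G x
  proof -
    define I where "I = (\<integral>z. \<bar>F (fst z) (snd z) - G (fst z) (snd z)\<bar> \<partial>phase_measure L)"
    have I_nn: "I \<ge> 0" unfolding I_def by simp
    have L2nn: "L2_dist L F G \<ge> 0" unfolding L2_dist_def by simp
    have Ib: "I \<le> sqrt mu * L2_dist L F G"
      unfolding I_def mu_def L2_dist_def
    proof (rule int_abs_L2[OF phase_finite])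
      show "(\<lambda>z. F (fst z) (snd z) - G (fst z) (snd z)) \<in> borel_measurable (phase_measure L)"
        using LF LG unfolding L2_fun_def by (intro borel_measurable_diff) auto
      show "integrable (phase_measure L) (\<lambda>z. (F (fst z) (snd z) - G (fst z) (snd z))^2)"
        by (rule diff_sq_int[OF LF LG])
    qed
    have A: "norm (v_f L kk phi F x - v_h L kk phi G x)
        \<le> 2 / \<xi> * norm ((J_f L kk F x + R_f L phi F x) - (J_h L kk G x + R_h L phi G x))"
      unfolding v_f_def v_h_def unitv_def by (rule unitv_lip[OF nx xi])
    have B: "norm ((J_f L kk F x + R_f L phi F x) - (J_h L kk G x + R_h L phi G x))
        \<le> norm (J_f L kk F x - J_h L kk G x) + norm (R_f L phi F x - R_h L phi G x)"
    proof -
      have "(J_f L kk F x + R_f L phi F x) - (J_h L kk G x + R_h L phi G x)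
          = (J_f L kk F x - J_h L kk G x) + (R_f L phi F x - R_h L phi G x)" by (simp add: algebra_simps)
      thus ?thesis using norm_triangle_ineq[of "J_f L kk F x - J_h L kk G x" "R_f L phi F x - R_h L phi G x"]
        by (simp only:)
    qed
    have CJ: "norm (J_f L kk F x - J_h L kk G x) \<le> Kb * I"
      unfolding I_def by (rule J_diff[OF box H0(2,1) Kb(2) LF LG])
    have CR: "norm (R_f L phi F x - R_h L phi G x) \<le> of_nat CARD('n) * M * I"
      unfolding I_def by (rule R_diff[OF box H0(3,1) M(2,1) Pb(2) LF LG])
    have "norm ((J_f L kk F x + R_f L phi F x) - (J_h L kk G x + R_h L phi G x))
          \<le> Kb * I + of_nat CARD('n) * M * I" using B CJ CR by linarith
    hence "2 / \<xi> * norm ((J_f L kk F x + R_f L phi F x) - (J_h L kk G x + R_h L phi G x))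
          \<le> 2 / \<xi> * (Kb * I + of_nat CARD('n) * M * I)" using xi by (intro mult_left_mono) auto
    with A have "norm (v_f L kk phi F x - v_h L kk phi G x) \<le> 2 / \<xi> * (Kb * I + of_nat CARD('n) * M * I)"
      by linarith
    also have "\<dots> = 2 / \<xi> * (Kb + of_nat CARD('n) * M) * I" by (simp add: algebra_simps)
    also have "\<dots> \<le> 2 / \<xi> * (Kb + of_nat CARD('n) * M) * (sqrt mu * L2_dist L F G)"
      using Ib xi Kb M by (intro mult_left_mono) auto
    also have "\<dots> = C0 * L2_dist L F G" by (simp add: C0_def)
    also have "\<dots> \<le> C * L2_dist L F G" using L2nn by (simp add: C_def algebra_simps)
    finally show ?thesis .
  qed
  show ?thesis
  proof (intro exI[of _ C] conjI allI impI ballI Cpos)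
    fix T :: real and f fh :: "real \<Rightarrow> real^'n \<Rightarrow> real^'n \<Rightarrow> real" and t
    assume hyp: "(\<forall>t\<in>{0..T}. L2_fun (phase_measure L) (\<lambda>z. f t (fst z) (snd z))) \<and>
      (\<forall>t\<in>{0..T}. \<forall>x\<in>torus_box L. norm (J_f L kk (f t) x + R_f L phi (f t) x) \<ge> \<xi>) \<and>
      (\<forall>t\<in>{0..T}. L2_fun (phase_measure L) (\<lambda>z. fh t (fst z) (snd z))) \<and>
      (\<forall>t\<in>{0..T}. \<forall>x\<in>torus_box L. J_h L kk (fh t) x + R_h L phi (fh t) x \<noteq> 0)"
      and t: "t \<in> {0..T}"
    show "AE x in lebesgue_on (torus_box L).
            norm (v_f L kk phi (f t) x - v_h L kk phi (fh t) x) \<le> C * L2_dist L (f t) (fh t)"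
    proof (rule AE_I2)
      fix x assume "x \<in> space (lebesgue_on (torus_box L))"
      hence xb: "x \<in> torus_box L" by simp
      show "norm (v_f L kk phi (f t) x - v_h L kk phi (fh t) x) \<le> C * L2_dist L (f t) (fh t)"
        using hyp t xb by (intro key) auto
    qed
  qed
qed


end
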